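(* The element $\Delta(\Lambda)$ lies in $\mathcal{I}_L\otimes\mathcal{I}_R$ and belongs to the cotensor product of $\mathcal{I}_L$ and $\mathcal{I}_R$: $(1\otimes\tau_R)(\Delta(\Lambda))=(\tau_L\otimes1)(\Delta(\Lambda))$ in $U_q(\mathfrak{sl}_2)^{\otimes3}$.
   Context: Let $\mathbb{K}$ be a field and $q\in\mathbb{K}$ not a root of unity. $U_q(\mathfrak{sl}_2)$ is the associative $\mathbb{K}$-algebra with generators $E,F,K,K^{-1}$ and relations $KK^{-1}=K^{-1}K=1$, $KE=q^2EK$, $KF=q^{-2}FK$, $EF-FE=\frac{K-K^{-1}}{q-q^{-1}}$, with Casimir element $\Lambda=(q-q^{-1})^2EF+q^{-1}K+qK^{-1}$ and coproduct $\Delta(E)=E\otimes1+K\otimes E$, $\Delta(F)=F\otimes K^{-1}+1\otimes F$, $\Delta(K^{\pm1})=K^{\pm1}\otimes K^{\pm1}$. $\mathcal{I}_R$ is the subalgebra generated by $EK^{-1},F,K^{-1},\Lambda$, with algebra morphism $\tau_R:\mathcal{I}_R\to U_q(\mathfrak{sl}_2)\otimes\mathcal{I}_R$: $\tau_R(EK^{-1})=K^{-1}\otimes EK^{-1}$, $\tau_R(F)=K\otimes F-q^{-3}(q-q^{-1})^2F^2K\otimes EK^{-1}+q^{-1}(q+q^{-1})FK\otimes K^{-1}-q^{-1}FK\otimes\Lambda$, $\tau_R(K^{-1})=1\otimes K^{-1}-q^{-1}(q-q^{-1})^2F\otimes EK^{-1}$, $\tau_R(\Lambda)=1\otimes\Lambda$.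 $\mathcal{I}_L$ is the subalgebra generated by $E,FK,K,\Lambda$, with algebra morphism $\tau_L:\mathcal{I}_L\to\mathcal{I}_L\otimes U_q(\mathfrak{sl}_2)$: $\tau_L(E)=E\otimes K$, $\tau_L(FK)=FK\otimes K^{-1}-q^{-1}(q-q^{-1})^2E\otimes F^2K+q(q+q^{-1})K\otimes F-q\Lambda\otimes F$, $\tau_L(K)=K\otimes1-q^{-1}(q-q^{-1})^2E\otimes FK$, $\tau_L(\Lambda)=\Lambda\otimes1$. *)

theory Defs
  imports Main
begin

text \<open>An element of the free associative algebra over a commutative ring 'k on an
alphabet 'a is a finitely supported coefficient function on words.\<close>

type_synonym ('a, 'k) ncpoly = "'a list \<Rightarrow> 'k"

definition ncfin :: "('a, 'k::zero) ncpoly \<Rightarrow> bool" where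
  "ncfin p \<longleftrightarrow> finite {w. p w \<noteq> 0}"

definition ncconst :: "'k::zero \<Rightarrow> ('a, 'k) ncpoly" where
  "ncconst c = (\<lambda>v. if v = [] then c else 0)"

definition ncvar :: "'a \<Rightarrow> ('a, 'k::{zero,one}) ncpoly" where
  "ncvar x = (\<lambda>v. if v = [x] then 1 else 0)"

definition ncadd :: "('a, 'k::plus) ncpoly \<Rightarrow> ('a, 'k) ncpoly \<Rightarrow> ('a, 'k) ncpoly" where
  "ncadd p r = (\<lambda>w. p w + r w)"

definition ncdiff :: "('a, 'k::minus) ncpoly \<Rightarrow> ('a, 'k) ncpoly \<Rightarrow> ('a, 'k) ncpoly" where
  "ncdiff p r = (\<lambda>w. p w - r w)"

definition ncscale :: "'k::times \<Rightarrow> ('a, 'k) ncpoly \<Rightarrow> ('a, 'k) ncpoly" where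
  "ncscale c p = (\<lambda>w. c * p w)"

definition ncmul :: "('a, 'k::comm_semiring_1) ncpoly \<Rightarrow> ('a, 'k) ncpoly \<Rightarrow> ('a, 'k) ncpoly" where
  "ncmul p r = (\<lambda>w. \<Sum>i\<le>length w. p (take i w) * r (drop i w))"

definition ncsum :: "('a, 'k::comm_semiring_1) ncpoly list \<Rightarrow> ('a, 'k) ncpoly" where
  "ncsum ps = foldr ncadd ps (ncconst 0)"

primrec ncprod :: "('a \<Rightarrow> ('b, 'k::comm_semiring_1) ncpoly) \<Rightarrow> 'a list \<Rightarrow> ('b, 'k) ncpoly" where
  "ncprod f [] = ncconst 1"
| "ncprod f (x # w) = ncmul (f x) (ncprod f w)"

definition ncsubst :: "('a \<Rightarrow> ('b, 'k::comm_semiring_1) ncpoly) \<Rightarrow> ('a, 'k) ncpoly \<Rightarrow> ('b, 'k) ncpoly" where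
  "ncsubst f p = (\<lambda>v. \<Sum>w\<in>{w. p w \<noteq> 0}. p w * ncprod f w v)"

inductive_set nc_ideal :: "('a, 'k::comm_ring_1) ncpoly set \<Rightarrow> ('a, 'k) ncpoly set"
  for R where
  gen: "r \<in> R \<Longrightarrow> r \<in> nc_ideal R"
| zero: "ncconst 0 \<in> nc_ideal R"
| add: "x \<in> nc_ideal R \<Longrightarrow> y \<in> nc_ideal R \<Longrightarrow> ncadd x y \<in> nc_ideal R"
| mult: "x \<in> nc_ideal R \<Longrightarrow> ncfin a \<Longrightarrow> ncfin b \<Longrightarrow> ncmul (ncmul a x) b \<in> nc_ideal R"

datatype gen = GE | GF | GK | GKi

abbreviation "uE \<equiv> ncvar GE"
abbreviation "uF \<equiv> ncvar GF"
abbreviation "uK \<equiv> ncvar GK"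
abbreviation "uKi \<equiv> ncvar GKi"

definition rel_U :: "'k::field \<Rightarrow> (gen, 'k) ncpoly set" where
  "rel_U q = {
     ncdiff (ncmul uK uKi) (ncconst 1),
     ncdiff (ncmul uKi uK) (ncconst 1),
     ncdiff (ncmul uK uE) (ncscale (q^2) (ncmul uE uK)),
     ncdiff (ncmul uK uF) (ncscale (inverse q ^ 2) (ncmul uF uK)),
     ncdiff (ncdiff (ncmul uE uF) (ncmul uF uE))
            (ncscale (inverse (q - inverse q)) (ncdiff uK uKi)) }"

text \<open>Placing a U-element into tensor slot i (letters of the tensor power are
pairs (generator, slot)).\<close>
definition slot :: "nat \<Rightarrow> (gen, 'k::comm_semiring_1) ncpoly \<Rightarrow> (gen \<times> nat, 'k) ncpoly" where
  "slot i p = ncsubst (\<lambda>x. ncvar (x, i)) p"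

definition shift :: "nat \<Rightarrow> (gen \<times> nat, 'k::comm_semiring_1) ncpoly \<Rightarrow> (gen \<times> nat, 'k) ncpoly" where
  "shift k P = ncsubst (\<lambda>(x, i). ncvar (x, i + k)) P"

definition rel_T :: "nat \<Rightarrow> 'k::field \<Rightarrow> (gen \<times> nat, 'k) ncpoly set" where
  "rel_T n q = {slot i r | i r. i < n \<and> r \<in> rel_U q}
      \<union> {ncdiff (ncmul (ncvar (x, i)) (ncvar (y, j))) (ncmul (ncvar (y, j)) (ncvar (x, i)))
          | x y i j. i < n \<and> j < n \<and> i \<noteq> j}"

definition eqT :: "nat \<Rightarrow> 'k::field \<Rightarrow> (gen \<times> nat, 'k) ncpoly \<Rightarrow> (gen \<times> nat, 'k) ncpoly \<Rightarrow> bool" where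
  "eqT n q P Q \<longleftrightarrow> ncdiff P Q \<in> nc_ideal (rel_T n q)"

text \<open>a \<otimes> b in U \<otimes> U; a \<otimes> X and X \<otimes> b in U^{\<otimes>3} for X in U \<otimes> U.\<close>
definition tens2 :: "(gen, 'k::comm_semiring_1) ncpoly \<Rightarrow> (gen, 'k) ncpoly \<Rightarrow> (gen \<times> nat, 'k) ncpoly" where
  "tens2 a b = ncmul (slot 0 a) (slot 1 b)"

definition tens_1_2 :: "(gen, 'k::comm_semiring_1) ncpoly \<Rightarrow> (gen \<times> nat, 'k) ncpoly \<Rightarrow> (gen \<times> nat, 'k) ncpoly" where
  "tens_1_2 a X = ncmul (slot 0 a) (shift 1 X)"

definition tens_2_1 :: "(gen \<times> nat, 'k::comm_semiring_1) ncpoly \<Rightarrow> (gen, 'k) ncpoly \<Rightarrow> (gen \<times> nat, 'k) ncpoly" where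
  "tens_2_1 X b = ncmul X (slot 2 b)"

definition Casimir :: "'k::field \<Rightarrow> (gen, 'k) ncpoly" where
  "Casimir q = ncadd (ncadd (ncscale ((q - inverse q)^2) (ncmul uE uF))
                            (ncscale (inverse q) uK)) (ncscale q uKi)"

definition Delta_gen :: "gen \<Rightarrow> (gen \<times> nat, 'k::comm_semiring_1) ncpoly" where
  "Delta_gen x = (case x of
      GE \<Rightarrow> ncadd (tens2 uE (ncconst 1)) (tens2 uK uE)
    | GF \<Rightarrow> ncadd (tens2 uF uKi) (tens2 (ncconst 1) uF)
    | GK \<Rightarrow> tens2 uK uK
    | GKi \<Rightarrow> tens2 uKi uKi)"

definition Delta :: "(gen, 'k::comm_semiring_1) ncpoly \<Rightarrow> (gen \<times> nat, 'k) ncpoly" where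
  "Delta p = ncsubst Delta_gen p"

text \<open>Elements of I_R (resp. I_L) are presented as noncommutative polynomials in
abstract letters standing for the generators EK^{-1}, F, K^{-1}, Lambda
(resp. E, FK, K, Lambda); evalR/evalL evaluate them in U and tauR/tauL apply the
algebra morphisms determined by the given images of the generators.\<close>

datatype genR = RE | RF | RKi | RL
datatype genL = LE | LF | LK | LL

definition genR_val :: "'k::field \<Rightarrow> genR \<Rightarrow> (gen, 'k) ncpoly" where
  "genR_val q x = (case x of
      RE \<Rightarrow> ncmul uE uKi | RF \<Rightarrow> uF | RKi \<Rightarrow> uKi | RL \<Rightarrow> Casimir q)"

definition genL_val :: "'k::field \<Rightarrow> genL \<Rightarrow> (gen, 'k) ncpoly" where
  "genL_val q x = (case x of
      LE \<Rightarrow> uE | LF \<Rightarrow> ncmul uF uK | LK \<Rightarrow> uK | LL \<Rightarrow> Casimir q)"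

definition evalR :: "'k::field \<Rightarrow> (genR, 'k) ncpoly \<Rightarrow> (gen, 'k) ncpoly" where
  "evalR q p = ncsubst (genR_val q) p"

definition evalL :: "'k::field \<Rightarrow> (genL, 'k) ncpoly \<Rightarrow> (gen, 'k) ncpoly" where
  "evalL q p = ncsubst (genL_val q) p"

definition tauR_gen :: "'k::field \<Rightarrow> genR \<Rightarrow> (gen \<times> nat, 'k) ncpoly" where
  "tauR_gen q x = (case x of
      RE \<Rightarrow> tens2 uKi (ncmul uE uKi)
    | RF \<Rightarrow> ncsum [ tens2 uK uF,
                   ncscale (- (inverse q ^ 3 * (q - inverse q)^2))
                           (tens2 (ncmul (ncmul uF uF) uK) (ncmul uE uKi)),
                   ncscale (inverse q * (q + inverse q)) (tens2 (ncmul uF uK) uKi),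
                   ncscale (- inverse q) (tens2 (ncmul uF uK) (Casimir q)) ]
    | RKi \<Rightarrow> ncadd (tens2 (ncconst 1) uKi)
                  (ncscale (- (inverse q * (q - inverse q)^2)) (tens2 uF (ncmul uE uKi)))
    | RL \<Rightarrow> tens2 (ncconst 1) (Casimir q))"

definition tauL_gen :: "'k::field \<Rightarrow> genL \<Rightarrow> (gen \<times> nat, 'k) ncpoly" where
  "tauL_gen q x = (case x of
      LE \<Rightarrow> tens2 uE uK
    | LF \<Rightarrow> ncsum [ tens2 (ncmul uF uK) uKi,
                   ncscale (- (inverse q * (q - inverse q)^2))
                           (tens2 uE (ncmul (ncmul uF uF) uK)),
                   ncscale (q * (q + inverse q)) (tens2 uK uF),
                   ncscale (- q) (tens2 (Casimir q) uF) ]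
    | LK \<Rightarrow> ncadd (tens2 uK (ncconst 1))
                 (ncscale (- (inverse q * (q - inverse q)^2)) (tens2 uE (ncmul uF uK)))
    | LL \<Rightarrow> tens2 (Casimir q) (ncconst 1))"

definition tauR :: "'k::field \<Rightarrow> (genR, 'k) ncpoly \<Rightarrow> (gen \<times> nat, 'k) ncpoly" where
  "tauR q p = ncsubst (tauR_gen q) p"

definition tauL :: "'k::field \<Rightarrow> (genL, 'k) ncpoly \<Rightarrow> (gen \<times> nat, 'k) ncpoly" where
  "tauL q p = ncsubst (tauL_gen q) p"

end

theory Submission
  imports Defs
begin

definition mon :: "'a list \<Rightarrow> ('a, 'k::{zero,one}) ncpoly" where
  "mon w = (\<lambda>v. if v = w then 1 else 0)"

lemma ncvar_mon: "ncvar x = mon [x]"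
  by (simp add: ncvar_def mon_def)

lemma ncconst_mon: "ncconst c = ncscale (c::'k::comm_semiring_1) (mon [])"
  by (auto simp: ncconst_def ncscale_def mon_def)

lemma mul_mon: "ncmul (mon u) (mon v) = (mon (u @ v) :: ('a,'k::comm_semiring_1) ncpoly)"
proof (rule ext)
  fix w :: "'a list"
  have h: "\<And>i. i \<in> {..length w} \<Longrightarrow> (if take i w = u then 1 else 0) * (if drop i w = v then 1 else 0)
      = (if i = length u \<and> w = u @ v then 1 else (0::'k::comm_semiring_1))"
  proof -
    fix i assume "i \<in> {..length w}"
    then have il: "i \<le> length w" by simp
    show "?thesis i"
    proof (cases "take i w = u \<and> drop i w = v")
      case True
      then have "w = u @ v" by (metis append_take_drop_id)
      moreover have "length u = i" using True il by auto
      ultimately show ?thesis using True by simp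
    next
      case False
      then have "\<not> (i = length u \<and> w = u @ v)" by auto
      then show ?thesis using False by auto
    qed
  qed
  have "ncmul (mon u) (mon v :: ('a,'k::comm_semiring_1) ncpoly) w = (\<Sum>i\<le>length w. (if i = length u \<and> w = u @ v then 1 else (0::'k)))"
    unfolding ncmul_def mon_def using h by (intro sum.cong) auto
  also have "\<dots> = (mon (u @ v) :: ('a,'k::comm_semiring_1) ncpoly) w"
    by (cases "w = u @ v") (auto simp: mon_def)
  finally show "ncmul (mon u) (mon v) w = (mon (u @ v) :: (_,'k::comm_semiring_1) ncpoly) w" .
qed

lemma fin_mon: "ncfin (mon w :: ('a,'k::{zero,one}) ncpoly)"
proof -
  have "{v. (mon w :: ('a,'k) ncpoly) v \<noteq> 0} \<subseteq> {w}" by (auto simp: mon_def)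
  then show ?thesis unfolding ncfin_def using finite_subset by blast
qed

lemma fin_add: "ncfin p \<Longrightarrow> ncfin r \<Longrightarrow> ncfin (ncadd p (r::('a,'k::comm_monoid_add) ncpoly))"
  unfolding ncfin_def ncadd_def
  by (rule finite_subset[of _ "{w. p w \<noteq> 0} \<union> {w. r w \<noteq> 0}"]) auto

lemma fin_diff: "ncfin p \<Longrightarrow> ncfin r \<Longrightarrow> ncfin (ncdiff p (r::('a,'k::ab_group_add) ncpoly))"
  unfolding ncfin_def ncdiff_def
  by (rule finite_subset[of _ "{w. p w \<noteq> 0} \<union> {w. r w \<noteq> 0}"]) auto

lemma fin_scale: "ncfin p \<Longrightarrow> ncfin (ncscale c (p::('a,'k::comm_semiring_1) ncpoly))"
  unfolding ncfin_def ncscale_def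
  by (rule finite_subset[of _ "{w. p w \<noteq> 0}"]) auto

lemma fin_mul: "ncfin p \<Longrightarrow> ncfin r \<Longrightarrow> ncfin (ncmul p (r::('a,'k::comm_semiring_1) ncpoly))"
  unfolding ncfin_def
proof (rule finite_subset[of _ "(\<lambda>(a,b). a @ b) ` ({w. p w \<noteq> 0} \<times> {w. r w \<noteq> 0})"])
  assume fp: "finite {w. p w \<noteq> 0}" and fr: "finite {w. r w \<noteq> 0}"
  show "finite ((\<lambda>(a,b). a @ b) ` ({w. p w \<noteq> 0} \<times> {w. r w \<noteq> 0}))" using fp fr by simp
  show "{w. ncmul p r w \<noteq> 0} \<subseteq> (\<lambda>(a,b). a @ b) ` ({w. p w \<noteq> 0} \<times> {w. r w \<noteq> 0})"
  proof
    fix w assume "w \<in> {w. ncmul p r w \<noteq> 0}"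
    then have "(\<Sum>i\<le>length w. p (take i w) * r (drop i w)) \<noteq> 0" by (simp add: ncmul_def)
    then obtain i where "p (take i w) * r (drop i w) \<noteq> 0"
      by (meson sum.not_neutral_contains_not_neutral)
    then have "p (take i w) \<noteq> 0" "r (drop i w) \<noteq> 0" by auto
    moreover have "w = take i w @ drop i w" by simp
    ultimately show "w \<in> (\<lambda>(a,b). a @ b) ` ({w. p w \<noteq> 0} \<times> {w. r w \<noteq> 0})"
      by (metis (mono_tags, lifting) SigmaI case_prod_conv image_eqI mem_Collect_eq)
  qed
qed

lemma fin_var: "ncfin (ncvar x :: ('a,'k::{zero,one}) ncpoly)"
  by (simp add: ncvar_mon fin_mon)

lemma fin_const: "ncfin (ncconst c :: ('a,'k::comm_semiring_1) ncpoly)"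
  by (simp add: ncconst_mon fin_mon fin_scale)

lemmas fin_simps = fin_mon fin_add fin_diff fin_scale fin_mul fin_var fin_const

lemma subst_S:
  assumes "finite S" "{w. p w \<noteq> 0} \<subseteq> S"
  shows "ncsubst f p = (\<lambda>v. \<Sum>w\<in>S. p w * ncprod f w v)"
proof (rule ext)
  fix v
  show "ncsubst f p v = (\<Sum>w\<in>S. p w * ncprod f w v)"
    unfolding ncsubst_def
    by (rule sum.mono_neutral_left) (use assms in auto)
qed

lemma subst_add:
  fixes p r :: "('a,'k::comm_semiring_1) ncpoly"
  assumes "ncfin p" "ncfin r"
  shows "ncsubst f (ncadd p r) = ncadd (ncsubst f p) (ncsubst f r)"
proof -
  let ?S = "{w. p w \<noteq> 0} \<union> {w. r w \<noteq> 0}"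
  have fS: "finite ?S" using assms by (simp add: ncfin_def)
  have "ncsubst f (ncadd p r) = (\<lambda>v. \<Sum>w\<in>?S. ncadd p r w * ncprod f w v)"
    by (rule subst_S[OF fS]) (auto simp: ncadd_def)
  moreover have "ncsubst f p = (\<lambda>v. \<Sum>w\<in>?S. p w * ncprod f w v)"
    by (rule subst_S[OF fS]) auto
  moreover have "ncsubst f r = (\<lambda>v. \<Sum>w\<in>?S. r w * ncprod f w v)"
    by (rule subst_S[OF fS]) auto
  ultimately show ?thesis
    by (simp add: ncadd_def distrib_right sum.distrib)
qed

lemma subst_diff:
  fixes p r :: "('a,'k::comm_ring_1) ncpoly"
  assumes "ncfin p" "ncfin r"
  shows "ncsubst f (ncdiff p r) = ncdiff (ncsubst f p) (ncsubst f r)"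
proof -
  let ?S = "{w. p w \<noteq> 0} \<union> {w. r w \<noteq> 0}"
  have fS: "finite ?S" using assms by (simp add: ncfin_def)
  have "ncsubst f (ncdiff p r) = (\<lambda>v. \<Sum>w\<in>?S. ncdiff p r w * ncprod f w v)"
    by (rule subst_S[OF fS]) (auto simp: ncdiff_def)
  moreover have "ncsubst f p = (\<lambda>v. \<Sum>w\<in>?S. p w * ncprod f w v)"
    by (rule subst_S[OF fS]) auto
  moreover have "ncsubst f r = (\<lambda>v. \<Sum>w\<in>?S. r w * ncprod f w v)"
    by (rule subst_S[OF fS]) auto
  ultimately show ?thesis
    by (simp add: ncdiff_def left_diff_distrib sum_subtractf)
qed

lemma subst_scale:
  fixes p :: "('a,'k::comm_semiring_1) ncpoly"
  assumes "ncfin p"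
  shows "ncsubst f (ncscale c p) = ncscale c (ncsubst f p)"
proof -
  let ?S = "{w. p w \<noteq> 0}"
  have fS: "finite ?S" using assms by (simp add: ncfin_def)
  have "ncsubst f (ncscale c p) = (\<lambda>v. \<Sum>w\<in>?S. ncscale c p w * ncprod f w v)"
    by (rule subst_S[OF fS]) (auto simp: ncscale_def)
  moreover have "ncsubst f p = (\<lambda>v. \<Sum>w\<in>?S. p w * ncprod f w v)"
    by (rule subst_S[OF fS]) auto
  ultimately show ?thesis
    by (simp add: ncscale_def sum_distrib_left mult.assoc)
qed

lemma subst_mon: "ncsubst f (mon w :: ('a,'k::comm_semiring_1) ncpoly) = ncprod f w"
proof -
  have "ncsubst f (mon w :: ('a,'k) ncpoly) = (\<lambda>v. \<Sum>u\<in>{w}. mon w u * ncprod f u v)"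
    by (rule subst_S) (auto simp: mon_def)
  then show ?thesis by (simp add: mon_def)
qed

lemma mul_add_l: "ncmul (ncadd p r) s = ncadd (ncmul p s) (ncmul r (s::('a,'k::comm_semiring_1) ncpoly))"
  by (auto simp: ncmul_def ncadd_def distrib_right sum.distrib)
lemma mul_add_r: "ncmul s (ncadd p r) = ncadd (ncmul s p) (ncmul s (r::('a,'k::comm_semiring_1) ncpoly))"
  by (auto simp: ncmul_def ncadd_def distrib_left sum.distrib)
lemma mul_diff_l: "ncmul (ncdiff p r) s = ncdiff (ncmul p s) (ncmul r (s::('a,'k::comm_ring_1) ncpoly))"
  by (auto simp: ncmul_def ncdiff_def left_diff_distrib sum_subtractf)
lemma mul_diff_r: "ncmul s (ncdiff p r) = ncdiff (ncmul s p) (ncmul s (r::('a,'k::comm_ring_1) ncpoly))"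
  by (auto simp: ncmul_def ncdiff_def right_diff_distrib sum_subtractf)
lemma mul_scale_l: "ncmul (ncscale c p) s = ncscale c (ncmul p (s::('a,'k::comm_semiring_1) ncpoly))"
  by (auto simp: ncmul_def ncscale_def sum_distrib_left mult.assoc)
lemma mul_scale_r: "ncmul s (ncscale c p) = ncscale c (ncmul s (p::('a,'k::comm_semiring_1) ncpoly))"
  by (auto simp: ncmul_def ncscale_def sum_distrib_left mult.left_commute)
lemma scale_scale: "ncscale a (ncscale b p) = ncscale (a * b) (p::('a,'k::comm_semiring_1) ncpoly)"
  by (simp add: ncscale_def mult.assoc)
lemma scale_one: "ncscale 1 p = (p::('a,'k::comm_semiring_1) ncpoly)"
  by (simp add: ncscale_def)

lemmas red = ncvar_mon ncconst_mon mul_mon fin_simps subst_add subst_diff subst_scale subst_mon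
  mul_add_l mul_add_r mul_diff_l mul_diff_r mul_scale_l mul_scale_r scale_scale scale_one
  ncsum_def tens2_def tens_1_2_def tens_2_1_def slot_def shift_def Delta_def Casimir_def
  Delta_gen_def tauR_def tauL_def tauR_gen_def tauL_gen_def evalR_def evalL_def
  genR_val_def genL_val_def

definition TS :: "'k::field \<Rightarrow> ((genL, 'k) ncpoly \<times> (genR, 'k) ncpoly) list" where
  "TS q = [(ncvar LL, ncvar RKi), (ncvar LK, ncvar RL),
           (ncscale (- (q + inverse q)) (ncvar LK), ncvar RKi),
           (ncscale ((q - inverse q)^2) (ncvar LE), ncvar RF),
           (ncscale ((q - inverse q)^2 * inverse q ^ 2) (ncvar LF), ncvar RE)]"

lemma cot_eq:
  fixes q :: "'k::field"
  assumes "q \<noteq> 0"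
  shows "ncsum (map (\<lambda>(\<alpha>, \<beta>). tens_1_2 (evalL q \<alpha>) (tauR q \<beta>)) (TS q))
       = ncsum (map (\<lambda>(\<alpha>, \<beta>). tens_2_1 (tauL q \<alpha>) (evalR q \<beta>)) (TS q))"
  apply (simp add: red TS_def)
  apply (simp add: fun_eq_iff ncadd_def ncdiff_def ncscale_def mon_def)
  apply (intro allI conjI impI)
  using assms apply (simp_all add: field_simps power2_eq_square power3_eq_cube)
  done

lemma del_eq:
  fixes q :: "'k::field"
  assumes "q \<noteq> 0"
  shows "ncdiff (Delta (Casimir q)) (ncsum (map (\<lambda>(\<alpha>, \<beta>). tens2 (evalL q \<alpha>) (evalR q \<beta>)) (TS q)))
     = ncadd (ncmul (ncmul (ncscale ((q - inverse q)^2) (ncvar (GK,0)))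
                (ncdiff (ncmul (ncvar (GE,1)) (ncvar (GF,0))) (ncmul (ncvar (GF,0)) (ncvar (GE,1)))))
                (ncvar (GKi,1)))
             (ncmul (ncmul (ncconst ((q - inverse q)^2))
                (slot 0 (ncdiff (ncmul uK uF) (ncscale (inverse q ^ 2) (ncmul uF uK)))))
                (ncmul (ncvar (GE,1)) (ncvar (GKi,1))))"
  apply (simp add: red TS_def)
  apply (simp add: fun_eq_iff ncadd_def ncdiff_def ncscale_def mon_def)
  done

theorem corollary2p5:
  fixes q :: "'k::field"
  assumes "q \<noteq> 0" and "\<forall>n::nat. n > 0 \<longrightarrow> q ^ n \<noteq> 1"
  shows "\<exists>ts :: ((genL, 'k) ncpoly \<times> (genR, 'k) ncpoly) list.
           (\<forall>(\<alpha>, \<beta>) \<in> set ts. ncfin \<alpha> \<and> ncfin \<beta>)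
         \<and> eqT 2 q (Delta (Casimir q))
                  (ncsum (map (\<lambda>(\<alpha>, \<beta>). tens2 (evalL q \<alpha>) (evalR q \<beta>)) ts))
         \<and> eqT 3 q (ncsum (map (\<lambda>(\<alpha>, \<beta>). tens_1_2 (evalL q \<alpha>) (tauR q \<beta>)) ts))
                  (ncsum (map (\<lambda>(\<alpha>, \<beta>). tens_2_1 (tauL q \<alpha>) (evalR q \<beta>)) ts))"
proof (intro exI conjI)
  show "\<forall>(\<alpha>, \<beta>) \<in> set (TS q). ncfin \<alpha> \<and> ncfin \<beta>"
    by (simp add: TS_def fin_simps)
  have X: "ncdiff (ncmul (ncvar (GE,1)) (ncvar (GF,0))) (ncmul (ncvar (GF,0)) (ncvar (GE,1)))
       \<in> rel_T 2 q" unfolding rel_T_def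
    apply (rule UnI2, rule CollectI)
    apply (rule exI[of _ GE], rule exI[of _ GF], rule exI[of _ 1], rule exI[of _ 0])
    by simp
  have Y: "slot 0 (ncdiff (ncmul uK uF) (ncscale (inverse q ^ 2) (ncmul uF uK))) \<in> rel_T 2 q"
    unfolding rel_T_def rel_U_def
    apply (rule UnI1, rule CollectI)
    apply (rule exI[of _ 0], rule exI[of _ "ncdiff (ncmul uK uF) (ncscale (inverse q ^ 2) (ncmul uF uK))"])
    by simp
  show "eqT 2 q (Delta (Casimir q))
                  (ncsum (map (\<lambda>(\<alpha>, \<beta>). tens2 (evalL q \<alpha>) (evalR q \<beta>)) (TS q)))"
    unfolding eqT_def del_eq[OF assms(1)]
    by (intro nc_ideal.add nc_ideal.mult nc_ideal.gen X Y) (simp_all add: fin_simps)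
  have Z: "ncdiff P P = ncconst 0" for P :: "(gen \<times> nat, 'k) ncpoly"
    by (auto simp: ncdiff_def ncconst_def)
  show "eqT 3 q (ncsum (map (\<lambda>(\<alpha>, \<beta>). tens_1_2 (evalL q \<alpha>) (tauR q \<beta>)) (TS q)))
                  (ncsum (map (\<lambda>(\<alpha>, \<beta>). tens_2_1 (tauL q \<alpha>) (evalR q \<beta>)) (TS q)))"
    unfolding eqT_def cot_eq[OF assms(1)] Z by (rule nc_ideal.zero)
qed

end
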